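(* Let $k\ge1$ be an integer and $\alpha>k$ real. Then $$\sum_{n=1}^\infty\frac{H_{n+\alpha}}{n\binom{n+k}{k}}=\sum_{j=1}^k(-1)^{j+1}\binom kj\Bigg\{H_\alpha^2+H_\alpha^{(2)}-H_{\alpha-j}^2-H_{\alpha-j}^{(2)}-(j-\alpha)\sum_{i=1}^j\frac{H_{\alpha+i-j}}{i(\alpha+i-j)}\Bigg\},$$ $$\sum_{n=1}^\infty\frac{H^{(2)}_{n+\alpha}}{n\binom{n+k}{k}}=\sum_{j=1}^k(-1)^{j+1}\binom kj\Bigg\{2H_\alpha^{(3)}+H_{\alpha-j}\zeta(2)+2H_\alpha H_\alpha^{(2)}-2H_{\alpha-j}^{(3)}-H_\alpha\zeta(2)-2H_{\alpha-j}H_{\alpha-j}^{(2)}-(j-\alpha)\sum_{i=1}^j\frac{H^{(2)}_{\alpha+i-j}}{i(\alpha+i-j)}-\sum_{i=1}^j\frac{H_{\alpha+i-j}}{(\alpha+i-j)^2}\Bigg\},$$ $$\sum_{n=1}^\infty\frac{H^2_{n+\alpha}}{n\binom{n+k}{k}}=\sum_{j=1}^k(-1)^{j+1}\binom kj\Bigg\{H_\alpha^3+H_\alpha H_\alpha^{(2)}+H_\alpha\zeta(2)-H_{\alpha-j}^3-H_{\alpha-j}H_{\alpha-j}^{(2)}-H_{\alpha-j}\zeta(2)+\sum_{i=1}^j\frac{H_{\alpha+i-j}}{(\alpha+i-j)^2}-(j-\alpha)\sum_{i=1}^j\frac{H^2_{\alpha+i-j}}{i(\alpha+i-j)}\Bi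gg\}.$$
   Context: Shifted harmonic numbers: for a real $\alpha$ that is not a negative integer, $H_\alpha := \sum_{k=1}^\infty\left(\frac1k-\frac1{k+\alpha}\right)$ and, for integers $m\ge 2$, $H_\alpha^{(m)} := \sum_{k=1}^\infty\left(\frac1{k^m}-\frac1{(k+\alpha)^m}\right)=\zeta(m)-\zeta(m,\alpha+1)$, where $\zeta$ is the Riemann zeta function and $\zeta(s,\alpha+1)=\sum_{n=1}^\infty (n+\alpha)^{-s}$ is the Hurwitz zeta function. Powers such as $H_\alpha^2$ mean $(H_\alpha)^2$. *)

theory Defs
  imports "HOL-Analysis.Analysis"
begin

definition Hs :: "real \<Rightarrow> real" where
  "Hs a = (\<Sum>k. 1 / real (Suc k) - 1 / (real (Suc k) + a))"

definition Hsm :: "nat \<Rightarrow> real \<Rightarrow> real" where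
  "Hsm m a = (\<Sum>k. 1 / real (Suc k) ^ m - 1 / (real (Suc k) + a) ^ m)"

definition zeta_nat :: "nat \<Rightarrow> real" where
  "zeta_nat m = (\<Sum>k. 1 / real (Suc k) ^ m)"

end

theory Submission
  imports Defs "HOL-Real_Asymp.Real_Asymp"
begin

lemma zeta_summable: assumes "m \<ge> 2" shows "summable (\<lambda>k. 1 / real (Suc k) ^ m)"
proof -
  have "summable (\<lambda>n. inverse (real n ^ m))" by (rule inverse_power_summable[OF assms])
  hence "summable (\<lambda>n. inverse (real (Suc n) ^ m))" by (subst summable_Suc_iff)
  thus ?thesis by (simp only: divide_inverse mult_1)
qed

lemma Hs_term_eq: "x \<ge> 0 \<Longrightarrow> 1 / real (Suc k) - 1 / (real (Suc k) + x) = x / (real (Suc k) * (real (Suc k) + x))"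
  by (simp add: field_simps)

lemma Hs_summable: assumes "x \<ge> 0" shows "summable (\<lambda>k. 1 / real (Suc k) - 1 / (real (Suc k) + x))"
proof (rule summable_comparison_test)
  show "summable (\<lambda>k. x * (1 / real (Suc k) ^ 2))" using zeta_summable[of 2] by (intro summable_mult) auto
  show "\<exists>N. \<forall>n\<ge>N. norm (1 / real (Suc n) - 1 / (real (Suc n) + x)) \<le> x * (1 / real (Suc n) ^ 2)"
  proof (intro exI allI impI)
    fix n :: nat
    have e: "1 / real (Suc n) - 1 / (real (Suc n) + x) = x / (real (Suc n) * (real (Suc n) + x))"
      using assms by (rule Hs_term_eq)
    have "0 \<le> x / (real (Suc n) * (real (Suc n) + x))" using assms by simp
    hence "norm (1 / real (Suc n) - 1 / (real (Suc n) + x)) = x / (real (Suc n) * (real (Suc n) + x))"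
      unfolding real_norm_def e by (rule abs_of_nonneg)
    also have "\<dots> \<le> x / (real (Suc n) * real (Suc n))"
      using assms by (intro divide_left_mono mult_left_mono) auto
    finally show "norm (1 / real (Suc n) - 1 / (real (Suc n) + x)) \<le> x * (1 / real (Suc n) ^ 2)"
      by (simp add: power2_eq_square)
  qed
qed

lemma Hs_sums: "x \<ge> 0 \<Longrightarrow> (\<lambda>k. 1 / real (Suc k) - 1 / (real (Suc k) + x)) sums Hs x"
  unfolding Hs_def using Hs_summable summable_sums by blast

lemma shifted_power_summable: assumes "x \<ge> 0" "m \<ge> 2" shows "summable (\<lambda>k. 1 / (real (Suc k) + x) ^ m)"
proof (rule summable_comparison_test)
  show "summable (\<lambda>k. 1 / real (Suc k) ^ m)" using zeta_summable assms by blast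
  show "\<exists>N. \<forall>n\<ge>N. norm (1 / (real (Suc n) + x) ^ m) \<le> 1 / real (Suc n) ^ m"
  proof (intro exI[of _ 0] allI impI)
    fix n :: nat
    have p: "real (Suc n) ^ m \<le> (real (Suc n) + x) ^ m" using assms by (intro power_mono) auto
    have "1 / (real (Suc n) + x) ^ m \<le> 1 / real (Suc n) ^ m"
      by (rule divide_left_mono[OF p]) (use assms in auto)
    moreover have "0 \<le> 1 / (real (Suc n) + x) ^ m" using assms by simp
    ultimately show "norm (1 / (real (Suc n) + x) ^ m) \<le> 1 / real (Suc n) ^ m" by simp
  qed
qed

lemma Hsm_sums: assumes "x \<ge> 0" "m \<ge> 2"
  shows "(\<lambda>k. 1 / real (Suc k) ^ m - 1 / (real (Suc k) + x) ^ m) sums Hsm m x"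
    and "(\<lambda>k. 1 / (real (Suc k) + x) ^ m) sums (zeta_nat m - Hsm m x)"
proof -
  have a: "(\<lambda>k. 1 / real (Suc k) ^ m) sums zeta_nat m" unfolding zeta_nat_def
    using zeta_summable[OF assms(2)] summable_sums by blast
  have b: "(\<lambda>k. 1 / (real (Suc k) + x) ^ m) sums (\<Sum>k. 1 / (real (Suc k) + x) ^ m)"
    using shifted_power_summable[OF assms] summable_sums by blast
  have c: "(\<lambda>k. 1 / real (Suc k) ^ m - 1 / (real (Suc k) + x) ^ m) sums (zeta_nat m - (\<Sum>k. 1 / (real (Suc k) + x) ^ m))"
    using sums_diff[OF a b] .
  hence d: "Hsm m x = zeta_nat m - (\<Sum>k. 1 / (real (Suc k) + x) ^ m)" unfolding Hsm_def by (rule sums_unique[symmetric])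
  show "(\<lambda>k. 1 / real (Suc k) ^ m - 1 / (real (Suc k) + x) ^ m) sums Hsm m x" using c d by simp
  show "(\<lambda>k. 1 / (real (Suc k) + x) ^ m) sums (zeta_nat m - Hsm m x)" using b d by simp
qed

lemma Hs_rec: assumes "x \<ge> 0" shows "Hs (x + 1) = Hs x + 1 / (x + 1)"
proof -
  have t: "(\<lambda>k. 1 / (real k + 1 + x)) \<longlonglongrightarrow> 0" by real_asymp
  have "(\<lambda>k. 1 / (real k + 1 + x) - 1 / (real (Suc k) + 1 + x)) sums (1 / (real 0 + 1 + x) - 0)"
    using telescope_sums'[OF t] by simp
  hence "(\<lambda>k. (1 / real (Suc k) - 1 / (real (Suc k) + (x+1))) - (1 / real (Suc k) - 1 / (real (Suc k) + x))) sums (1 / (x + 1))"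
    by (simp add: algebra_simps)
  moreover have "(\<lambda>k. (1 / real (Suc k) - 1 / (real (Suc k) + (x+1))) - (1 / real (Suc k) - 1 / (real (Suc k) + x))) sums (Hs (x+1) - Hs x)"
    using assms by (intro sums_diff Hs_sums) auto
  ultimately show ?thesis using sums_unique2 by fastforce
qed

lemma Hsm_rec: assumes "x \<ge> 0" "m \<ge> 2" shows "Hsm m (x + 1) = Hsm m x + 1 / (x + 1) ^ m"
proof -
  have t: "(\<lambda>k. 1 / (real k + 1 + x) ^ m) \<longlonglongrightarrow> 0"
  proof -
    have "(\<lambda>k. 1 / (real k + 1 + x)) \<longlonglongrightarrow> 0" by real_asymp
    hence "(\<lambda>k. (1 / (real k + 1 + x)) ^ m) \<longlonglongrightarrow> 0 ^ m" by (intro tendsto_power)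
    thus ?thesis using assms by (simp add: power_one_over zero_power)
  qed
  have "(\<lambda>k. 1 / (real k + 1 + x) ^ m - 1 / (real (Suc k) + 1 + x) ^ m) sums (1 / (real 0 + 1 + x) ^ m - 0)"
    using telescope_sums'[OF t] by simp
  hence "(\<lambda>k. (1 / real (Suc k) ^ m - 1 / (real (Suc k) + (x+1)) ^ m) - (1 / real (Suc k) ^ m - 1 / (real (Suc k) + x) ^ m)) sums (1 / (x + 1) ^ m)"
    by (simp add: algebra_simps)
  moreover have "(\<lambda>k. (1 / real (Suc k) ^ m - 1 / (real (Suc k) + (x+1)) ^ m) - (1 / real (Suc k) ^ m - 1 / (real (Suc k) + x) ^ m)) sums (Hsm m (x+1) - Hsm m x)"
    using assms by (intro sums_diff Hsm_sums) auto
  ultimately show ?thesis using sums_unique2 by fastforce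
qed

lemma Hs_rec': "x \<ge> 1 \<Longrightarrow> Hs x = Hs (x - 1) + 1 / x"
  using Hs_rec[of "x - 1"] by simp
lemma Hsm_rec': "x \<ge> 1 \<Longrightarrow> m \<ge> 2 \<Longrightarrow> Hsm m x = Hsm m (x - 1) + 1 / x ^ m"
  using Hsm_rec[of "x - 1" m] by simp

lemma Hs_0: "Hs 0 = 0" unfolding Hs_def by simp

lemma Hs_nat: "Hs (real n) = harm n"
proof (induction n)
  case 0 thus ?case by (simp add: Hs_0 harm_def)
next
  case (Suc n)
  have "Hs (real (Suc n)) = Hs (real n + 1)" by (metis add.commute of_nat_Suc)
  also have "\<dots> = Hs (real n) + 1 / (real n + 1)" by (rule Hs_rec) simp
  finally show ?case using Suc by (simp add: harm_Suc divide_inverse add.commute)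
qed

lemma Hs_mono: assumes "0 \<le> x" "x \<le> z" shows "Hs x \<le> Hs z"
  unfolding Hs_def
proof (rule suminf_le)
  show "summable (\<lambda>k. 1 / real (Suc k) - 1 / (real (Suc k) + x))" using assms by (intro Hs_summable)
  show "summable (\<lambda>k. 1 / real (Suc k) - 1 / (real (Suc k) + z))" using assms by (intro Hs_summable) simp
  fix k :: nat
  have "1 / (real (Suc k) + z) \<le> 1 / (real (Suc k) + x)"
    by (rule divide_left_mono) (use assms in auto)
  thus "1 / real (Suc k) - 1 / (real (Suc k) + x) \<le> 1 / real (Suc k) - 1 / (real (Suc k) + z)" by simp
qed

lemma Hs_nonneg: "x \<ge> 0 \<Longrightarrow> Hs x \<ge> 0"
  using Hs_mono[of 0 x] by (simp add: Hs_0)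

lemma Hs_bound: assumes "x \<ge> 0" shows "Hs x \<le> 1 + ln (x + 1)"
proof -
  define n where "n = nat \<lceil>x\<rceil>"
  have xn: "x \<le> real n" "real n < x + 1" unfolding n_def using assms by linarith+
  have "Hs x \<le> harm n" using Hs_mono[OF assms xn(1)] by (simp add: Hs_nat)
  also have "harm n \<le> 1 + ln (x + 1)"
  proof (cases "n = 0")
    case True thus ?thesis using assms by (simp add: harm_def)
  next
    case False
    hence "harm n - ln (real n) \<le> harm 1 - ln (real 1)"
      by (intro euler_mascheroni_sequence_decreasing) auto
    hence "harm n \<le> 1 + ln (real n)" by (simp add: harm_def)
    also have "ln (real n) \<le> ln (x + 1)" using False xn by (intro ln_mono) auto
    finally show ?thesis by simp
  qed
  finally show ?thesis .
qed

lemma Hsm_bounds: assumes "x \<ge> 0" "m \<ge> 2" shows "0 \<le> Hsm m x" "Hsm m x \<le> zeta_nat m"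
proof -
  have "0 \<le> (\<Sum>k. 1 / (real (Suc k) + x) ^ m)"
    using assms by (intro suminf_nonneg shifted_power_summable) auto
  thus "Hsm m x \<le> zeta_nat m" using sums_unique[OF Hsm_sums(2)[OF assms]] by simp
  show "0 \<le> Hsm m x" unfolding Hsm_def
  proof (rule suminf_nonneg)
    show "summable (\<lambda>k. 1 / real (Suc k) ^ m - 1 / (real (Suc k) + x) ^ m)"
      using assms by (intro summable_diff zeta_summable shifted_power_summable) auto
    fix k :: nat
    have p: "real (Suc k) ^ m \<le> (real (Suc k) + x) ^ m" using assms by (intro power_mono) auto
    have "1 / (real (Suc k) + x) ^ m \<le> 1 / real (Suc k) ^ m"
      by (rule divide_left_mono[OF p]) (use assms in auto)
    thus "0 \<le> 1 / real (Suc k) ^ m - 1 / (real (Suc k) + x) ^ m" by simp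
  qed
qed

lemma sumC: assumes "y > 0" shows "(\<lambda>n. 1 / (real (Suc n) * (real (Suc n) + y))) sums (Hs y / y)"
proof -
  have "(\<lambda>n. (1 / real (Suc n) - 1 / (real (Suc n) + y)) / y) sums (Hs y / y)"
    using Hs_sums[of y] assms by (intro sums_divide) auto
  moreover have "(1 / real (Suc n) - 1 / (real (Suc n) + y)) / y = 1 / (real (Suc n) * (real (Suc n) + y))" for n
  proof -
    have *: "N > 0 \<Longrightarrow> N + y > 0 \<Longrightarrow> (1 / N - 1 / (N + y)) / y = 1 / (N * (N + y))" for N :: real
    proof -
      assume "N > 0" "N + y > 0"
      hence "N \<noteq> 0" "N + y \<noteq> 0" "y \<noteq> 0" using assms by auto
      thus ?thesis by (simp add: divide_simps)
    qed
    show ?thesis by (rule *) (use assms in auto)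
  qed
  ultimately show ?thesis by simp
qed

lemma sumC2: assumes "y > 0"
  shows "(\<lambda>n. 1 / (real (Suc n) * (real (Suc n) + y) ^ 2)) sums (Hs y / y ^ 2 - (zeta_nat 2 - Hsm 2 y) / y)"
proof -
  have "(\<lambda>n. 1 / (real (Suc n) * (real (Suc n) + y)) / y - 1 / (real (Suc n) + y) ^ 2 / y) sums (Hs y / y / y - (zeta_nat 2 - Hsm 2 y) / y)"
    using assms by (intro sums_diff sums_divide sumC Hsm_sums(2)) auto
  moreover have "1 / (real (Suc n) * (real (Suc n) + y)) / y - 1 / (real (Suc n) + y) ^ 2 / y = 1 / (real (Suc n) * (real (Suc n) + y) ^ 2)" for n
  proof -
    have *: "N > 0 \<Longrightarrow> N + y > 0 \<Longrightarrow> 1 / (N * (N + y)) / y - 1 / (N + y) ^ 2 / y = 1 / (N * (N + y) ^ 2)" for N :: real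
    proof -
      assume "N > 0" "N + y > 0"
      hence "N \<noteq> 0" "N + y \<noteq> 0" "y \<noteq> 0" using assms by auto
      thus ?thesis by (simp add: divide_simps) (simp add: algebra_simps power2_eq_square)
    qed
    show ?thesis by (rule *) (use assms in auto)
  qed
  moreover have "Hs y / y / y = Hs y / y ^ 2" by (simp add: power2_eq_square)
  ultimately show ?thesis by (metis (no_types, lifting) sums_cong)
qed

lemma tele_fin: "(\<Sum>i=1..j. G (real i) - G (real i - 1)) = G (real j) - (G 0 :: real)"
proof (induction j)
  case 0 thus ?case by simp
next
  case (Suc j) thus ?case by (simp add: sum.atLeast1_atMost_eq)
qed

lemma shift_sums: assumes "e \<longlonglongrightarrow> (0::real)"
  shows "(\<lambda>n. e (Suc n) - e (Suc n + j)) sums (\<Sum>i=1..j. e i)"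
proof (induction j)
  case 0 thus ?case by simp
next
  case (Suc j)
  have t: "(\<lambda>n. e (n + Suc j)) \<longlonglongrightarrow> 0" using LIMSEQ_ignore_initial_segment[OF assms] .
  have "(\<lambda>n. e (n + Suc j) - e (Suc n + Suc j)) sums (e (0 + Suc j) - 0)"
    using telescope_sums'[OF t] by simp
  hence "(\<lambda>n. e (Suc n + j) - e (Suc n + Suc j)) sums e (Suc j)" by simp
  from sums_add[OF Suc this] show ?case by (simp add: algebra_simps)
qed

lemma shift_main:
  fixes f :: "real \<Rightarrow> real" and \<beta> :: real and j :: nat and D :: "nat \<Rightarrow> real"
  assumes D: "\<And>i. i \<in> {1..j} \<Longrightarrow> (\<lambda>n. (f (real (Suc n) + (\<beta> + real i)) - f (real (Suc n) + (\<beta> + real i) - 1)) / real (Suc n)) sums D i"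
    and lim: "(\<lambda>m. f (real m + \<beta>) / real m) \<longlonglongrightarrow> 0"
  shows "(\<lambda>n. f (real (Suc n) + (\<beta> + real j)) * (1 / real (Suc n) - 1 / (real (Suc n) + real j))) sums (\<Sum>i=1..j. D i + f (\<beta> + real i) / real i)"
proof -
  define e where "e m = f (real m + \<beta>) / real m" for m :: nat
  have A: "(\<lambda>n. \<Sum>i=1..j. (f (real (Suc n) + (\<beta> + real i)) - f (real (Suc n) + (\<beta> + real i) - 1)) / real (Suc n)) sums (\<Sum>i=1..j. D i)"
    by (rule sums_sum) (rule D)
  have B: "(\<lambda>n. e (Suc n) - e (Suc n + j)) sums (\<Sum>i=1..j. e i)"
    by (rule shift_sums) (use lim in \<open>simp add: e_def\<close>)
  have C: "(\<lambda>n. (\<Sum>i=1..j. (f (real (Suc n) + (\<beta> + real i)) - f (real (Suc n) + (\<beta> + real i) - 1)) / real (Suc n)) + (e (Suc n) - e (Suc n + j))) sums ((\<Sum>i=1..j. D i) + (\<Sum>i=1..j. e i))"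
    by (rule sums_add[OF A B])
  have eq: "(\<Sum>i=1..j. (f (real (Suc n) + (\<beta> + real i)) - f (real (Suc n) + (\<beta> + real i) - 1)) / real (Suc n)) + (e (Suc n) - e (Suc n + j))
        = f (real (Suc n) + (\<beta> + real j)) * (1 / real (Suc n) - 1 / (real (Suc n) + real j))" for n
  proof -
    define G where "G t = f (real (Suc n) + (\<beta> + t)) / real (Suc n)" for t
    have "(\<Sum>i=1..j. (f (real (Suc n) + (\<beta> + real i)) - f (real (Suc n) + (\<beta> + real i) - 1)) / real (Suc n))
        = (\<Sum>i=1..j. G (real i) - G (real i - 1))"
      by (intro sum.cong refl) (simp add: G_def diff_divide_distrib algebra_simps)
    also have "\<dots> = G (real j) - G 0" by (rule tele_fin)
    finally have s: "(\<Sum>i=1..j. (f (real (Suc n) + (\<beta> + real i)) - f (real (Suc n) + (\<beta> + real i) - 1)) / real (Suc n))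
        = f (real (Suc n) + (\<beta> + real j)) / real (Suc n) - f (real (Suc n) + \<beta>) / real (Suc n)"
      by (simp add: G_def)
    have e1: "e (Suc n) = f (real (Suc n) + \<beta>) / real (Suc n)" by (simp add: e_def)
    have e2: "e (Suc n + j) = f (real (Suc n) + (\<beta> + real j)) / (real (Suc n) + real j)"
      unfolding e_def by (simp add: algebra_simps)
    show ?thesis unfolding s e1 e2 by (simp add: algebra_simps diff_divide_distrib)
  qed
  have val: "(\<Sum>i=1..j. D i) + (\<Sum>i=1..j. e i) = (\<Sum>i=1..j. D i + f (\<beta> + real i) / real i)"
    by (simp add: sum.distrib e_def add.commute)
  show ?thesis using C unfolding eq val .
qed

lemma key_alg: fixes p y A B :: real assumes "p > 0" "y > 0"
  shows "2 * (y / (p * (p + y)) * (A + 1 / (p + y))) - 2 * y / (p * (p + y)) * B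
       = ((A - B)^2 - (A + 1 / (p + y) - (B + 1 / p))^2) + (1 / p ^ 2 - 1 / (p + y) ^ 2)"
proof -
  have "p \<noteq> 0" "p + y \<noteq> 0" using assms by auto
  thus ?thesis by (simp add: divide_simps) (simp add: algebra_simps power2_eq_square)
qed

lemma harm_shift_lim: "(\<lambda>n. harm (n + m) - harm n :: real) \<longlonglongrightarrow> 0"
proof -
  have a: "(\<lambda>n. harm n - ln (real n)) \<longlonglongrightarrow> euler_mascheroni" by (rule euler_mascheroni_LIMSEQ)
  have b: "(\<lambda>n. harm (n + m) - ln (real (n + m))) \<longlonglongrightarrow> euler_mascheroni"
    by (rule LIMSEQ_ignore_initial_segment[OF a])
  have c: "(\<lambda>n. ln (real n + real m) - ln (real n)) \<longlonglongrightarrow> 0" by real_asymp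
  have "(\<lambda>n. (harm (n + m) - ln (real (n + m))) - (harm n - ln (real n)) + (ln (real n + real m) - ln (real n))) \<longlonglongrightarrow> euler_mascheroni - euler_mascheroni + 0"
    by (intro tendsto_add tendsto_diff a b c)
  thus ?thesis by simp
qed

lemma c_lim: assumes "y \<ge> 0" shows "(\<lambda>n. Hs (real n + y) - Hs (real n)) \<longlonglongrightarrow> 0"
proof (rule tendsto_sandwich)
  define m where "m = nat \<lceil>y\<rceil>"
  have ym: "y \<le> real m" unfolding m_def by linarith
  show "\<forall>\<^sub>F n in sequentially. 0 \<le> Hs (real n + y) - Hs (real n)"
    using Hs_mono[of "real n" "real n + y" for n] assms by auto
  show "\<forall>\<^sub>F n in sequentially. Hs (real n + y) - Hs (real n) \<le> harm (n + m) - harm n"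
  proof (intro always_eventually allI)
    fix n
    have "Hs (real n + y) \<le> Hs (real (n + m))" using assms ym by (intro Hs_mono) auto
    moreover have "Hs (real (n + m)) = harm (n + m)" by (rule Hs_nat)
    ultimately show "Hs (real n + y) - Hs (real n) \<le> harm (n + m) - harm n" by (simp add: Hs_nat)
  qed
  show "(\<lambda>n. 0) \<longlonglongrightarrow> (0::real)" by simp
  show "(\<lambda>n. harm (n + m) - harm n :: real) \<longlonglongrightarrow> 0" by (rule harm_shift_lim)
qed

lemma antidiag_sum:
  fixes y :: real and N :: nat
  shows "(\<Sum>i\<le>N. y / (real (Suc i) * real (Suc (N - i)) * (real i + real (N - i) + 2 + y)))
       = 2 * y * harm (Suc N) / ((real N + 2) * (real N + 2 + y))"
proof -
  have "(\<Sum>i\<le>N. y / (real (Suc i) * real (Suc (N - i)) * (real i + real (N - i) + 2 + y)))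
      = (\<Sum>i\<le>N. y / ((real N + 2) * (real N + 2 + y)) * (1 / real (Suc i) + 1 / real (Suc (N - i))))"
  proof (intro sum.cong refl)
    fix i assume "i \<in> {..N}"
    hence iN: "i \<le> N" by simp
    hence e: "real (N - i) = real N - real i" by (simp add: of_nat_diff)
    have p1: "real N + 2 - real i > 0" "real i + 1 > 0" "real N + 2 > 0" using iN by auto
    show "y / (real (Suc i) * real (Suc (N - i)) * (real i + real (N - i) + 2 + y)) =
          y / ((real N + 2) * (real N + 2 + y)) * (1 / real (Suc i) + 1 / real (Suc (N - i)))"
    proof (cases "real N + 2 + y = 0")
      case True
      have "real i + real (N - i) + 2 + y = 0" using True unfolding e by simp
      thus ?thesis using True by simp
    next
      case False
      have "real N + 1 - real i \<noteq> 0" "1 + real i \<noteq> 0" "real N + 2 \<noteq> 0" using iN by auto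
      moreover have "real i + real (N - i) = real N" "real (Suc (N - i)) = real N + 1 - real i" using iN by auto
      ultimately show ?thesis using False by (simp add: divide_simps)
    qed
  qed
  also have "\<dots> = y / ((real N + 2) * (real N + 2 + y)) * ((\<Sum>i\<le>N. 1 / real (Suc i)) + (\<Sum>i\<le>N. 1 / real (Suc (N - i))))"
    by (simp only: sum.distrib[symmetric] sum_distrib_left)
  also have "(\<Sum>i\<le>N. 1 / real (Suc (N - i))) = (\<Sum>i\<le>N. 1 / real (Suc i))"
    using sum.nat_diff_reindex[of "\<lambda>i. 1 / real (Suc i)" "Suc N"] by (simp add: lessThan_Suc_atMost)
  also have "(\<Sum>i\<le>N. 1 / real (Suc i)) = harm (Suc N)"
    by (simp add: harm_altdef lessThan_Suc_atMost divide_inverse)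
  finally show ?thesis by simp
qed

lemma double_sum:
  assumes y: "y > 0"
  shows "(\<lambda>n. y / (real (Suc n) * (real (Suc n) + y)) * Hs (real (Suc n) + y)) sums
           (\<Sum>N. 2 * y * harm (Suc N) / ((real N + 2) * (real N + 2 + y)))"
    and "summable (\<lambda>N. 2 * y * harm (Suc N) / ((real N + 2) * (real N + 2 + y)))"
proof -
  define g where "g = (\<lambda>(n::nat, k::nat). y / (real (Suc n) * real (Suc k) * (real n + real k + 2 + y)))"
  define w where "w N = 2 * y * harm (Suc N) / ((real N + 2) * (real N + 2 + y))" for N
  define u where "u n = y / (real (Suc n) * (real (Suc n) + y)) * Hs (real (Suc n) + y)" for n
  have g_nonneg: "g p \<ge> 0" for p using y by (cases p) (auto simp: g_def)
  have w_nonneg: "w N \<ge> 0" for N using y unfolding w_def by (intro divide_nonneg_pos mult_nonneg_nonneg harm_nonneg) auto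
  have w_le: "w N \<le> 2 * y * ((1 + ln (real N + 2)) / (real N + 1) ^ 2)" for N
  proof -
    have h0: "Hs (real (Suc N)) \<le> 1 + ln (real (Suc N) + 1)" by (rule Hs_bound) simp
    have h1: "Hs (real (Suc N)) = harm (Suc N)" by (rule Hs_nat)
    have h2: "real (Suc N) + 1 = real N + 2" by simp
    have h: "harm (Suc N) \<le> 1 + ln (real N + 2)" using h0 unfolding h1 h2 .
    have "(real N + 1) ^ 2 \<le> (real N + 2) * (real N + 2 + y)"
      using y by (simp add: power2_eq_square mult_mono)
    hence "2 * y * harm (Suc N) / ((real N + 2) * (real N + 2 + y)) \<le> 2 * y * harm (Suc N) / (real N + 1) ^ 2"
      using y by (intro divide_left_mono) (auto simp: harm_nonneg)
    also have "\<dots> \<le> 2 * y * (1 + ln (real N + 2)) / (real N + 1) ^ 2"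
      using y h by (intro divide_right_mono mult_left_mono) auto
    finally show ?thesis by (simp add: w_def)
  qed
  have sumw: "summable w"
  proof (rule summable_comparison_test)
    have "summable (\<lambda>N. (1 + ln (real N + 2)) / (real N + 1) ^ 2)"
    proof (rule summable_comparison_test_bigo)
      show "summable (\<lambda>n. norm (real n powr (-3/2)))"
        by (simp add: summable_real_powr_iff)
      show "(\<lambda>n::nat. (1 + ln (real n + 2)) / (real n + 1) ^ 2) \<in> O(\<lambda>n. real n powr (-3/2))"
        by real_asymp
    qed
    thus "summable (\<lambda>N. 2 * y * ((1 + ln (real N + 2)) / (real N + 1) ^ 2))" by (rule summable_mult)
    show "\<exists>N0. \<forall>N\<ge>N0. norm (w N) \<le> 2 * y * ((1 + ln (real N + 2)) / (real N + 1) ^ 2)"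
      using w_le w_nonneg by auto
  qed
  have w_eq: "w = (\<lambda>N. 2 * y * harm (Suc N) / ((real N + 2) * (real N + 2 + y)))" by (rule ext) (simp add: w_def)
  show "summable (\<lambda>N. 2 * y * harm (Suc N) / ((real N + 2) * (real N + 2 + y)))" using sumw unfolding w_eq .
  define F where "F = (\<lambda>(N::nat, i::nat). g (i, N - i))"
  have diag: "((\<lambda>i. F (N, i)) has_sum w N) {..N}" for N
  proof -
    have "((\<lambda>i. F (N, i)) has_sum (\<Sum>i\<le>N. F (N, i))) {..N}" by (rule has_sum_finite) simp
    moreover have "(\<Sum>i\<le>N. F (N, i)) = w N"
      unfolding F_def g_def w_def using antidiag_sum[of y N] by simp
    ultimately show ?thesis by simp
  qed
  have wsum: "(w has_sum (\<Sum>N. w N)) UNIV"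
    using sums_nonneg_imp_has_sum[OF summable_sums[OF sumw] w_nonneg] .
  have Fsum: "F summable_on (SIGMA N:UNIV. {..N})"
    by (rule summable_on_SigmaI[OF diag]) (use wsum g_nonneg in \<open>auto simp: F_def has_sum_imp_summable\<close>)
  have Fhas: "(F has_sum (\<Sum>N. w N)) (SIGMA N:UNIV. {..N})"
    by (rule has_sum_SigmaI[OF diag wsum Fsum])
  define h where "h = (\<lambda>(N::nat, i::nat). (i, N - i))"
  have bij: "bij_betw h (SIGMA N:UNIV. {..N}) UNIV"
    by (rule bij_betw_byWitness[where f' = "\<lambda>(n, k). (n + k, n)"]) (auto simp: h_def)
  have "((\<lambda>p. g (h p)) has_sum (\<Sum>N. w N)) (SIGMA N:UNIV. {..N})"
    using Fhas by (simp add: F_def h_def case_prod_unfold)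
  hence ghas: "(g has_sum (\<Sum>N. w N)) (UNIV \<times> UNIV)"
    using has_sum_reindex_bij_betw[OF bij, of g] by simp
  have rows: "((\<lambda>k. g (n, k)) has_sum u n) UNIV" for n
  proof -
    define x where "x = real (Suc n) + y"
    have x0: "x > 0" using y by (simp add: x_def)
    have "(\<lambda>k. y / (real (Suc n) * x) * (1 / real (Suc k) - 1 / (real (Suc k) + x))) sums (y / (real (Suc n) * x) * Hs x)"
      using x0 by (intro sums_mult Hs_sums) auto
    moreover have "y / (real (Suc n) * x) * (1 / real (Suc k) - 1 / (real (Suc k) + x)) = g (n, k)" for k
    proof -
      have a: "real (Suc k) + x > 0" "real (Suc n) > 0" "real (Suc k) > 0" using x0 by auto
      have b: "real n + real k + 2 + y = real (Suc k) + x" by (simp add: x_def)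
      show ?thesis unfolding g_def using a x0 by (simp add: b divide_simps)
    qed
    ultimately have "(\<lambda>k. g (n, k)) sums u n" by (simp add: u_def x_def)
    thus ?thesis by (rule sums_nonneg_imp_has_sum) (rule g_nonneg)
  qed
  have "(u has_sum (\<Sum>N. w N)) UNIV"
    by (rule has_sum_Sigma'[OF ghas rows])
  thus "(\<lambda>n. y / (real (Suc n) * (real (Suc n) + y)) * Hs (real (Suc n) + y)) sums (\<Sum>N. 2 * y * harm (Suc N) / ((real N + 2) * (real N + 2 + y)))"
  proof -
    have u_eq: "u = (\<lambda>n. y / (real (Suc n) * (real (Suc n) + y)) * Hs (real (Suc n) + y))" by (rule ext) (simp add: u_def)
    show ?thesis using has_sum_imp_sums[OF \<open>(u has_sum (\<Sum>N. w N)) UNIV\<close>] unfolding u_eq w_eq .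
  qed
qed

lemma key:
  assumes y: "y > 0"
  shows "(\<lambda>n. Hs (real (Suc n) + y) / (real (Suc n) * (real (Suc n) + y))) sums ((Hs y ^ 2 + Hsm 2 y) / y)"
proof -
  define T where "T = (\<Sum>N. 2 * y * harm (Suc N) / ((real N + 2) * (real N + 2 + y)))"
  define u where "u n = y / (real (Suc n) * (real (Suc n) + y)) * Hs (real (Suc n) + y)" for n
  define v where "v n = 2 * y / (real (Suc n) * (real (Suc n) + y)) * Hs (real n)" for n
  define c where "c n = Hs (real n + y) - Hs (real n)" for n
  have us: "u sums T" unfolding u_def T_def using double_sum(1)[OF y] .
  have "(\<lambda>N. 2 * y * harm (Suc N) / ((real N + 2) * (real N + 2 + y))) sums T"
    unfolding T_def using double_sum(2)[OF y] by (rule summable_sums)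
  moreover have "v (Suc N) = 2 * y * harm (Suc N) / ((real N + 2) * (real N + 2 + y))" for N
  proof -
    have "Hs (real (Suc N)) = harm (Suc N)" by (rule Hs_nat)
    moreover have "real (Suc N) + 1 = real N + 2" by simp
    ultimately show ?thesis unfolding v_def by (simp add: add_ac)
  qed
  ultimately have "(\<lambda>n. v (Suc n)) sums T" by simp
  hence vs: "v sums T" using sums_Suc_iff[of v T] by (simp add: v_def Hs_0)
  have "(\<lambda>n. 2 * u n - v n) sums (2 * T - T)" by (intro sums_diff sums_mult us vs)
  moreover have "(\<lambda>n. 2 * u n - v n) sums (Hs y ^ 2 + Hsm 2 y)"
  proof -
    have cl: "(\<lambda>n. c n ^ 2) \<longlonglongrightarrow> 0 ^ 2" unfolding c_def using c_lim[of y] y by (intro tendsto_power) auto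
    have tel: "(\<lambda>n. c n ^ 2 - c (Suc n) ^ 2) sums (c 0 ^ 2 - 0 ^ 2)" by (rule telescope_sums'[OF cl])
    have z: "(\<lambda>k. 1 / real (Suc k) ^ 2 - 1 / (real (Suc k) + y) ^ 2) sums Hsm 2 y"
      using y by (intro Hsm_sums(1)) auto
    have "(\<lambda>n. (c n ^ 2 - c (Suc n) ^ 2) + (1 / real (Suc n) ^ 2 - 1 / (real (Suc n) + y) ^ 2)) sums (c 0 ^ 2 - 0 ^ 2 + Hsm 2 y)"
      by (rule sums_add[OF tel z])
    moreover have "c 0 = Hs y" by (simp add: c_def Hs_0)
    moreover have "(c n ^ 2 - c (Suc n) ^ 2) + (1 / real (Suc n) ^ 2 - 1 / (real (Suc n) + y) ^ 2) = 2 * u n - v n" for n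
    proof -
      have r1: "Hs (real (Suc n) + y) = Hs (real n + y) + 1 / (real (Suc n) + y)"
        using Hs_rec[of "real n + y"] y by (simp add: add_ac)
      have r2: "Hs (real (Suc n)) = Hs (real n) + 1 / real (Suc n)"
        using Hs_rec[of "real n"] by (simp add: add_ac)
      have "2 * u n - v n = ((Hs (real n + y) - Hs (real n))^2 - (Hs (real n + y) + 1 / (real (Suc n) + y) - (Hs (real n) + 1 / real (Suc n)))^2)
             + (1 / real (Suc n) ^ 2 - 1 / (real (Suc n) + y) ^ 2)"
        unfolding u_def v_def r1 by (rule key_alg) (use y in auto)
      also have "\<dots> = (c n ^ 2 - c (Suc n) ^ 2) + (1 / real (Suc n) ^ 2 - 1 / (real (Suc n) + y) ^ 2)"
        unfolding c_def r1[symmetric] r2[symmetric] by simp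
      finally show ?thesis by simp
    qed
    ultimately show ?thesis by simp
  qed
  ultimately have TT: "T = Hs y ^ 2 + Hsm 2 y" using sums_unique2 by fastforce
  have "(\<lambda>n. u n / y) sums (T / y)" by (rule sums_divide[OF us])
  moreover have "u n / y = Hs (real (Suc n) + y) / (real (Suc n) * (real (Suc n) + y))" for n
    using y by (simp add: u_def)
  ultimately show ?thesis unfolding TT by simp
qed

lemma alg_H: fixes x r H H2 :: real assumes "x > 0" "r > 0"
  shows "(H^2 + H2) - ((H - 1/x)^2 + (H2 - 1/x^2)) + (x - r) * (H / (r * x)) = H / x + H / r"
proof -
  have "x \<noteq> 0" "r \<noteq> 0" using assms by auto
  thus ?thesis by (simp add: divide_simps) (simp add: algebra_simps power2_eq_square)
qed
lemma alg_H2: fixes x r H H2 H3 Z :: real assumes "x > 0" "r > 0"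
  shows "(2 * H3 - H * Z + 2 * H * H2) - (2 * (H3 - 1/x^3) - (H - 1/x) * Z + 2 * (H - 1/x) * (H2 - 1/x^2))
     + (x - r) * (H2 / (r * x)) - H / x^2 = (H / x^2 - (Z - H2) / x) + H2 / r"
proof -
  have "x \<noteq> 0" "r \<noteq> 0" using assms by auto
  thus ?thesis by (simp add: divide_simps power2_eq_square power3_eq_cube) algebra
qed
lemma alg_HH: fixes x r H H2 Z :: real assumes "x > 0" "r > 0"
  shows "(H^3 + H * H2 + H * Z) - ((H - 1/x)^3 + (H - 1/x) * (H2 - 1/x^2) + (H - 1/x) * Z)
     + H / x^2 + (x - r) * (H^2 / (r * x)) = (2 * ((H^2 + H2) / x) - (H / x^2 - (Z - H2) / x)) + H^2 / r"
proof -
  have "x \<noteq> 0" "r \<noteq> 0" using assms by auto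
  thus ?thesis by (simp add: divide_simps power2_eq_square power3_eq_cube) algebra
qed

lemma D_H: assumes y: "y > 0"
  shows "(\<lambda>n. (Hs (real (Suc n) + y) - Hs (real (Suc n) + y - 1)) / real (Suc n)) sums (Hs y / y)"
proof -
  have "(Hs (real (Suc n) + y) - Hs (real (Suc n) + y - 1)) / real (Suc n) = 1 / (real (Suc n) * (real (Suc n) + y))" for n
    using Hs_rec'[of "real (Suc n) + y"] y by simp
  thus ?thesis using sumC[OF y] by simp
qed

lemma D_H2: assumes y: "y > 0"
  shows "(\<lambda>n. (Hsm 2 (real (Suc n) + y) - Hsm 2 (real (Suc n) + y - 1)) / real (Suc n)) sums (Hs y / y ^ 2 - (zeta_nat 2 - Hsm 2 y) / y)"
proof -
  have "(Hsm 2 (real (Suc n) + y) - Hsm 2 (real (Suc n) + y - 1)) / real (Suc n) = 1 / (real (Suc n) * (real (Suc n) + y) ^ 2)" for n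
    using Hsm_rec'[of "real (Suc n) + y" 2] y by simp
  thus ?thesis using sumC2[OF y] by simp
qed

lemma D_HH: assumes y: "y > 0"
  shows "(\<lambda>n. (Hs (real (Suc n) + y) ^ 2 - Hs (real (Suc n) + y - 1) ^ 2) / real (Suc n)) sums
      (2 * ((Hs y ^ 2 + Hsm 2 y) / y) - (Hs y / y ^ 2 - (zeta_nat 2 - Hsm 2 y) / y))"
proof -
  have "(\<lambda>n. 2 * (Hs (real (Suc n) + y) / (real (Suc n) * (real (Suc n) + y))) - 1 / (real (Suc n) * (real (Suc n) + y) ^ 2))
        sums (2 * ((Hs y ^ 2 + Hsm 2 y) / y) - (Hs y / y ^ 2 - (zeta_nat 2 - Hsm 2 y) / y))"
    by (intro sums_diff sums_mult key sumC2 y)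
  moreover have "(Hs (real (Suc n) + y) ^ 2 - Hs (real (Suc n) + y - 1) ^ 2) / real (Suc n)
      = 2 * (Hs (real (Suc n) + y) / (real (Suc n) * (real (Suc n) + y))) - 1 / (real (Suc n) * (real (Suc n) + y) ^ 2)" for n
  proof -
    define x where "x = real (Suc n) + y"
    define N where "N = real (Suc n)"
    have x0: "x \<noteq> 0" "N \<noteq> 0" using y by (auto simp: x_def N_def)
    have r: "Hs (x - 1) = Hs x - 1 / x" using Hs_rec'[of x] y by (simp add: x_def)
    have "(Hs x ^ 2 - Hs (x - 1) ^ 2) / N = 2 * (Hs x / (N * x)) - 1 / (N * x ^ 2)"
      unfolding r using x0 by (simp add: divide_simps power2_eq_square) algebra
    thus ?thesis by (simp add: x_def N_def)
  qed
  ultimately show ?thesis by simp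
qed

lemma lim_H: assumes "b \<ge> 0" shows "(\<lambda>m. Hs (real m + b) / real m) \<longlonglongrightarrow> 0"
proof (rule tendsto_sandwich)
  show "\<forall>\<^sub>F m in sequentially. 0 \<le> Hs (real m + b) / real m"
    using assms by (intro always_eventually allI divide_nonneg_nonneg Hs_nonneg) auto
  show "\<forall>\<^sub>F m in sequentially. Hs (real m + b) / real m \<le> (1 + ln (real m + b + 1)) / real m"
    using assms by (intro always_eventually allI divide_right_mono Hs_bound) auto
  show "(\<lambda>m. 0) \<longlonglongrightarrow> (0::real)" by simp
  show "(\<lambda>m. (1 + ln (real m + b + 1)) / real m) \<longlonglongrightarrow> 0" using assms by real_asymp
qed

lemma lim_HH: assumes "b \<ge> 0" shows "(\<lambda>m. Hs (real m + b) ^ 2 / real m) \<longlonglongrightarrow> 0"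
proof (rule tendsto_sandwich)
  show "\<forall>\<^sub>F m in sequentially. 0 \<le> Hs (real m + b) ^ 2 / real m"
    using assms by (intro always_eventually allI divide_nonneg_nonneg) auto
  show "\<forall>\<^sub>F m in sequentially. Hs (real m + b) ^ 2 / real m \<le> (1 + ln (real m + b + 1)) ^ 2 / real m"
    using assms by (intro always_eventually allI divide_right_mono power_mono Hs_bound Hs_nonneg) auto
  show "(\<lambda>m. 0) \<longlonglongrightarrow> (0::real)" by simp
  show "(\<lambda>m. (1 + ln (real m + b + 1)) ^ 2 / real m) \<longlonglongrightarrow> 0" using assms by real_asymp
qed

lemma lim_H2: assumes "b \<ge> 0" shows "(\<lambda>m. Hsm 2 (real m + b) / real m) \<longlonglongrightarrow> 0"
proof (rule tendsto_sandwich)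
  show "\<forall>\<^sub>F m in sequentially. 0 \<le> Hsm 2 (real m + b) / real m"
    using assms by (intro always_eventually allI divide_nonneg_nonneg Hsm_bounds) auto
  show "\<forall>\<^sub>F m in sequentially. Hsm 2 (real m + b) / real m \<le> zeta_nat 2 / real m"
    using assms by (intro always_eventually allI divide_right_mono Hsm_bounds) auto
  show "(\<lambda>m. 0) \<longlonglongrightarrow> (0::real)" by simp
  show "(\<lambda>m. zeta_nat 2 / real m) \<longlonglongrightarrow> 0" by real_asymp
qed

lemma T_H:
  assumes "\<alpha> > real j"
  shows "(\<lambda>n. Hs (real (Suc n) + \<alpha>) * (1 / real (Suc n) - 1 / (real (Suc n) + real j))) sums
     (Hs \<alpha> ^ 2 + Hsm 2 \<alpha> - Hs (\<alpha> - real j) ^ 2 - Hsm 2 (\<alpha> - real j)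
         - (real j - \<alpha>) * (\<Sum>i=1..j. Hs (\<alpha> + real i - real j) / (real i * (\<alpha> + real i - real j))))"
proof -
  define \<beta> where "\<beta> = \<alpha> - real j"
  have b0: "\<beta> > 0" using assms by (simp add: \<beta>_def)
  have a\<beta>: "\<alpha> = \<beta> + real j" by (simp add: \<beta>_def)
  have S: "(\<lambda>n. Hs (real (Suc n) + (\<beta> + real j)) * (1 / real (Suc n) - 1 / (real (Suc n) + real j))) sums
      (\<Sum>i=1..j. Hs (\<beta> + real i) / (\<beta> + real i) + Hs (\<beta> + real i) / real i)"
  proof (rule shift_main)
    fix i assume "i \<in> {1..j}"
    show "(\<lambda>n. (Hs (real (Suc n) + (\<beta> + real i)) - Hs (real (Suc n) + (\<beta> + real i) - 1)) / real (Suc n)) sums (Hs (\<beta> + real i) / (\<beta> + real i))"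
      by (rule D_H) (use b0 in auto)
  next
    show "(\<lambda>m. Hs (real m + \<beta>) / real m) \<longlonglongrightarrow> 0" by (rule lim_H) (use b0 in auto)
  qed
  define F where "F t = Hs (\<beta> + t) ^ 2 + Hsm 2 (\<beta> + t)" for t
  have e1: "\<alpha> + real i - real j = \<beta> + real i" for i by (simp add: \<beta>_def)
  have e2: "\<alpha> - real j = \<beta>" by (simp add: \<beta>_def)
  have e3: "real j - \<alpha> = - \<beta>" by (simp add: \<beta>_def)
  have "Hs \<alpha> ^ 2 + Hsm 2 \<alpha> - Hs (\<alpha> - real j) ^ 2 - Hsm 2 (\<alpha> - real j)
         - (real j - \<alpha>) * (\<Sum>i=1..j. Hs (\<alpha> + real i - real j) / (real i * (\<alpha> + real i - real j)))
      = (F (real j) - F 0) + \<beta> * (\<Sum>i=1..j. Hs (\<beta> + real i) / (real i * (\<beta> + real i)))"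
    unfolding e1 e2 e3 F_def by (simp add: a\<beta>)
  also have "F (real j) - F 0 = (\<Sum>i=1..j. F (real i) - F (real i - 1))" by (rule tele_fin[symmetric])
  also have "(\<Sum>i=1..j. F (real i) - F (real i - 1)) + \<beta> * (\<Sum>i=1..j. Hs (\<beta> + real i) / (real i * (\<beta> + real i)))
      = (\<Sum>i=1..j. F (real i) - F (real i - 1) + \<beta> * (Hs (\<beta> + real i) / (real i * (\<beta> + real i))))"
    by (simp add: sum.distrib sum_distrib_left)
  also have "\<dots> = (\<Sum>i=1..j. Hs (\<beta> + real i) / (\<beta> + real i) + Hs (\<beta> + real i) / real i)"
  proof (rule sum.cong[OF refl])
    fix i assume i: "i \<in> {1..j}"
    define x where "x = \<beta> + real i"
    have x1: "x \<ge> 1" "x > 0" using i b0 by (auto simp: x_def)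
    have r0: "\<beta> + (real i - 1) = x - 1" "\<beta> = x - real i" by (simp_all add: x_def)
    have r1: "Hs (x - 1) = Hs x - 1 / x" using Hs_rec'[OF x1(1)] by simp
    have r2: "Hsm 2 (x - 1) = Hsm 2 x - 1 / x ^ 2" using Hsm_rec'[OF x1(1), of 2] by simp
    have f1: "F (real i) = Hs x ^ 2 + Hsm 2 x" by (simp add: F_def x_def)
    have f2: "F (real i - 1) = (Hs x - 1 / x) ^ 2 + (Hsm 2 x - 1 / x ^ 2)"
      unfolding F_def r0(1) r1 r2 ..
    have ri: "real i > 0" using i by auto
    show "F (real i) - F (real i - 1) + \<beta> * (Hs (\<beta> + real i) / (real i * (\<beta> + real i)))
        = Hs (\<beta> + real i) / (\<beta> + real i) + Hs (\<beta> + real i) / real i"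
      unfolding f1 f2 x_def[symmetric] unfolding r0(2) by (rule alg_H[OF x1(2) ri])
  qed
  finally have val: "Hs \<alpha> ^ 2 + Hsm 2 \<alpha> - Hs (\<alpha> - real j) ^ 2 - Hsm 2 (\<alpha> - real j)
         - (real j - \<alpha>) * (\<Sum>i=1..j. Hs (\<alpha> + real i - real j) / (real i * (\<alpha> + real i - real j)))
      = (\<Sum>i=1..j. Hs (\<beta> + real i) / (\<beta> + real i) + Hs (\<beta> + real i) / real i)" .
  show ?thesis unfolding val using S unfolding a\<beta>[symmetric] .
qed

lemma T_H2:
  assumes "\<alpha> > real j"
  shows "(\<lambda>n. Hsm 2 (real (Suc n) + \<alpha>) * (1 / real (Suc n) - 1 / (real (Suc n) + real j))) sums
     (2 * Hsm 3 \<alpha> + Hs (\<alpha> - real j) * zeta_nat 2 + 2 * Hs \<alpha> * Hsm 2 \<alpha>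
         - 2 * Hsm 3 (\<alpha> - real j) - Hs \<alpha> * zeta_nat 2
         - 2 * Hs (\<alpha> - real j) * Hsm 2 (\<alpha> - real j)
         - (real j - \<alpha>) * (\<Sum>i=1..j. Hsm 2 (\<alpha> + real i - real j) / (real i * (\<alpha> + real i - real j)))
         - (\<Sum>i=1..j. Hs (\<alpha> + real i - real j) / (\<alpha> + real i - real j) ^ 2))"
proof -
  define \<beta> where "\<beta> = \<alpha> - real j"
  have b0: "\<beta> > 0" using assms by (simp add: \<beta>_def)
  have a\<beta>: "\<alpha> = \<beta> + real j" by (simp add: \<beta>_def)
  have S: "(\<lambda>n. Hsm 2 (real (Suc n) + (\<beta> + real j)) * (1 / real (Suc n) - 1 / (real (Suc n) + real j))) sums
      (\<Sum>i=1..j. (Hs (\<beta> + real i) / (\<beta> + real i) ^ 2 - (zeta_nat 2 - Hsm 2 (\<beta> + real i)) / (\<beta> + real i)) + Hsm 2 (\<beta> + real i) / real i)"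
  proof (rule shift_main[where f = "Hsm 2"])
    fix i assume "i \<in> {1..j}"
    show "(\<lambda>n. (Hsm 2 (real (Suc n) + (\<beta> + real i)) - Hsm 2 (real (Suc n) + (\<beta> + real i) - 1)) / real (Suc n)) sums
       (Hs (\<beta> + real i) / (\<beta> + real i) ^ 2 - (zeta_nat 2 - Hsm 2 (\<beta> + real i)) / (\<beta> + real i))"
      by (rule D_H2) (use b0 in auto)
  next
    show "(\<lambda>m. Hsm 2 (real m + \<beta>) / real m) \<longlonglongrightarrow> 0" by (rule lim_H2) (use b0 in auto)
  qed
  define F where "F t = 2 * Hsm 3 (\<beta> + t) - Hs (\<beta> + t) * zeta_nat 2 + 2 * Hs (\<beta> + t) * Hsm 2 (\<beta> + t)" for t
  have e1: "\<alpha> + real i - real j = \<beta> + real i" for i by (simp add: \<beta>_def)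
  have e2: "\<alpha> - real j = \<beta>" by (simp add: \<beta>_def)
  have e3: "real j - \<alpha> = - \<beta>" by (simp add: \<beta>_def)
  have "2 * Hsm 3 \<alpha> + Hs (\<alpha> - real j) * zeta_nat 2 + 2 * Hs \<alpha> * Hsm 2 \<alpha>
         - 2 * Hsm 3 (\<alpha> - real j) - Hs \<alpha> * zeta_nat 2
         - 2 * Hs (\<alpha> - real j) * Hsm 2 (\<alpha> - real j)
         - (real j - \<alpha>) * (\<Sum>i=1..j. Hsm 2 (\<alpha> + real i - real j) / (real i * (\<alpha> + real i - real j)))
         - (\<Sum>i=1..j. Hs (\<alpha> + real i - real j) / (\<alpha> + real i - real j) ^ 2)
      = (F (real j) - F 0) + \<beta> * (\<Sum>i=1..j. Hsm 2 (\<beta> + real i) / (real i * (\<beta> + real i)))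
          - (\<Sum>i=1..j. Hs (\<beta> + real i) / (\<beta> + real i) ^ 2)"
    unfolding e1 e2 e3 F_def by (simp add: a\<beta> algebra_simps)
  also have "F (real j) - F 0 = (\<Sum>i=1..j. F (real i) - F (real i - 1))" by (rule tele_fin[symmetric])
  also have "(\<Sum>i=1..j. F (real i) - F (real i - 1)) + \<beta> * (\<Sum>i=1..j. Hsm 2 (\<beta> + real i) / (real i * (\<beta> + real i)))
          - (\<Sum>i=1..j. Hs (\<beta> + real i) / (\<beta> + real i) ^ 2)
      = (\<Sum>i=1..j. F (real i) - F (real i - 1) + \<beta> * (Hsm 2 (\<beta> + real i) / (real i * (\<beta> + real i)))
          - Hs (\<beta> + real i) / (\<beta> + real i) ^ 2)"
    by (simp add: sum.distrib sum_distrib_left sum_subtractf)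
  also have "\<dots> = (\<Sum>i=1..j. (Hs (\<beta> + real i) / (\<beta> + real i) ^ 2 - (zeta_nat 2 - Hsm 2 (\<beta> + real i)) / (\<beta> + real i)) + Hsm 2 (\<beta> + real i) / real i)"
  proof (rule sum.cong[OF refl])
    fix i assume i: "i \<in> {1..j}"
    define x where "x = \<beta> + real i"
    have x1: "x \<ge> 1" "x > 0" using i b0 by (auto simp: x_def)
    have r0: "\<beta> + (real i - 1) = x - 1" "\<beta> = x - real i" by (simp_all add: x_def)
    have r1: "Hs (x - 1) = Hs x - 1 / x" using Hs_rec'[OF x1(1)] by simp
    have r2: "Hsm 2 (x - 1) = Hsm 2 x - 1 / x ^ 2" using Hsm_rec'[OF x1(1), of 2] by simp
    have r3: "Hsm 3 (x - 1) = Hsm 3 x - 1 / x ^ 3" using Hsm_rec'[OF x1(1), of 3] by simp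
    have f1: "F (real i) = 2 * Hsm 3 x - Hs x * zeta_nat 2 + 2 * Hs x * Hsm 2 x" by (simp add: F_def x_def)
    have f2: "F (real i - 1) = 2 * (Hsm 3 x - 1 / x ^ 3) - (Hs x - 1 / x) * zeta_nat 2 + 2 * (Hs x - 1 / x) * (Hsm 2 x - 1 / x ^ 2)"
      unfolding F_def r0(1) r1 r2 r3 ..
    have ri: "real i > 0" using i by auto
    show "F (real i) - F (real i - 1) + \<beta> * (Hsm 2 (\<beta> + real i) / (real i * (\<beta> + real i)))
          - Hs (\<beta> + real i) / (\<beta> + real i) ^ 2
        = (Hs (\<beta> + real i) / (\<beta> + real i) ^ 2 - (zeta_nat 2 - Hsm 2 (\<beta> + real i)) / (\<beta> + real i)) + Hsm 2 (\<beta> + real i) / real i"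
      unfolding f1 f2 x_def[symmetric] unfolding r0(2) by (rule alg_H2[OF x1(2) ri])
  qed
  finally have val: "2 * Hsm 3 \<alpha> + Hs (\<alpha> - real j) * zeta_nat 2 + 2 * Hs \<alpha> * Hsm 2 \<alpha>
         - 2 * Hsm 3 (\<alpha> - real j) - Hs \<alpha> * zeta_nat 2
         - 2 * Hs (\<alpha> - real j) * Hsm 2 (\<alpha> - real j)
         - (real j - \<alpha>) * (\<Sum>i=1..j. Hsm 2 (\<alpha> + real i - real j) / (real i * (\<alpha> + real i - real j)))
         - (\<Sum>i=1..j. Hs (\<alpha> + real i - real j) / (\<alpha> + real i - real j) ^ 2)
      = (\<Sum>i=1..j. (Hs (\<beta> + real i) / (\<beta> + real i) ^ 2 - (zeta_nat 2 - Hsm 2 (\<beta> + real i)) / (\<beta> + real i)) + Hsm 2 (\<beta> + real i) / real i)" .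
  show ?thesis unfolding val using S unfolding a\<beta>[symmetric] .
qed

lemma T_HH:
  assumes "\<alpha> > real j"
  shows "(\<lambda>n. Hs (real (Suc n) + \<alpha>) ^ 2 * (1 / real (Suc n) - 1 / (real (Suc n) + real j))) sums
     (Hs \<alpha> ^ 3 + Hs \<alpha> * Hsm 2 \<alpha> + Hs \<alpha> * zeta_nat 2
         - Hs (\<alpha> - real j) ^ 3 - Hs (\<alpha> - real j) * Hsm 2 (\<alpha> - real j)
         - Hs (\<alpha> - real j) * zeta_nat 2
         + (\<Sum>i=1..j. Hs (\<alpha> + real i - real j) / (\<alpha> + real i - real j) ^ 2)
         - (real j - \<alpha>) * (\<Sum>i=1..j. Hs (\<alpha> + real i - real j) ^ 2 / (real i * (\<alpha> + real i - real j))))"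
proof -
  define \<beta> where "\<beta> = \<alpha> - real j"
  have b0: "\<beta> > 0" using assms by (simp add: \<beta>_def)
  have a\<beta>: "\<alpha> = \<beta> + real j" by (simp add: \<beta>_def)
  have S: "(\<lambda>n. Hs (real (Suc n) + (\<beta> + real j)) ^ 2 * (1 / real (Suc n) - 1 / (real (Suc n) + real j))) sums
      (\<Sum>i=1..j. (2 * ((Hs (\<beta> + real i) ^ 2 + Hsm 2 (\<beta> + real i)) / (\<beta> + real i)) - (Hs (\<beta> + real i) / (\<beta> + real i) ^ 2 - (zeta_nat 2 - Hsm 2 (\<beta> + real i)) / (\<beta> + real i))) + Hs (\<beta> + real i) ^ 2 / real i)"
  proof (rule shift_main[where f = "\<lambda>x. Hs x ^ 2"])
    fix i assume "i \<in> {1..j}"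
    show "(\<lambda>n. (Hs (real (Suc n) + (\<beta> + real i)) ^ 2 - Hs (real (Suc n) + (\<beta> + real i) - 1) ^ 2) / real (Suc n)) sums
       (2 * ((Hs (\<beta> + real i) ^ 2 + Hsm 2 (\<beta> + real i)) / (\<beta> + real i)) - (Hs (\<beta> + real i) / (\<beta> + real i) ^ 2 - (zeta_nat 2 - Hsm 2 (\<beta> + real i)) / (\<beta> + real i)))"
      by (rule D_HH) (use b0 in auto)
  next
    show "(\<lambda>m. Hs (real m + \<beta>) ^ 2 / real m) \<longlonglongrightarrow> 0" by (rule lim_HH) (use b0 in auto)
  qed
  define F where "F t = Hs (\<beta> + t) ^ 3 + Hs (\<beta> + t) * Hsm 2 (\<beta> + t) + Hs (\<beta> + t) * zeta_nat 2" for t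
  have e1: "\<alpha> + real i - real j = \<beta> + real i" for i by (simp add: \<beta>_def)
  have e2: "\<alpha> - real j = \<beta>" by (simp add: \<beta>_def)
  have e3: "real j - \<alpha> = - \<beta>" by (simp add: \<beta>_def)
  have "Hs \<alpha> ^ 3 + Hs \<alpha> * Hsm 2 \<alpha> + Hs \<alpha> * zeta_nat 2
         - Hs (\<alpha> - real j) ^ 3 - Hs (\<alpha> - real j) * Hsm 2 (\<alpha> - real j)
         - Hs (\<alpha> - real j) * zeta_nat 2
         + (\<Sum>i=1..j. Hs (\<alpha> + real i - real j) / (\<alpha> + real i - real j) ^ 2)
         - (real j - \<alpha>) * (\<Sum>i=1..j. Hs (\<alpha> + real i - real j) ^ 2 / (real i * (\<alpha> + real i - real j)))
      = (F (real j) - F 0) + (\<Sum>i=1..j. Hs (\<beta> + real i) / (\<beta> + real i) ^ 2)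
          + \<beta> * (\<Sum>i=1..j. Hs (\<beta> + real i) ^ 2 / (real i * (\<beta> + real i)))"
    unfolding e1 e2 e3 F_def by (simp add: a\<beta> algebra_simps)
  also have "F (real j) - F 0 = (\<Sum>i=1..j. F (real i) - F (real i - 1))" by (rule tele_fin[symmetric])
  also have "(\<Sum>i=1..j. F (real i) - F (real i - 1)) + (\<Sum>i=1..j. Hs (\<beta> + real i) / (\<beta> + real i) ^ 2)
          + \<beta> * (\<Sum>i=1..j. Hs (\<beta> + real i) ^ 2 / (real i * (\<beta> + real i)))
      = (\<Sum>i=1..j. F (real i) - F (real i - 1) + Hs (\<beta> + real i) / (\<beta> + real i) ^ 2
          + \<beta> * (Hs (\<beta> + real i) ^ 2 / (real i * (\<beta> + real i))))"
    by (simp add: sum.distrib sum_distrib_left)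
  also have "\<dots> = (\<Sum>i=1..j. (2 * ((Hs (\<beta> + real i) ^ 2 + Hsm 2 (\<beta> + real i)) / (\<beta> + real i)) - (Hs (\<beta> + real i) / (\<beta> + real i) ^ 2 - (zeta_nat 2 - Hsm 2 (\<beta> + real i)) / (\<beta> + real i))) + Hs (\<beta> + real i) ^ 2 / real i)"
  proof (rule sum.cong[OF refl])
    fix i assume i: "i \<in> {1..j}"
    define x where "x = \<beta> + real i"
    have x1: "x \<ge> 1" "x > 0" using i b0 by (auto simp: x_def)
    have r0: "\<beta> + (real i - 1) = x - 1" "\<beta> = x - real i" by (simp_all add: x_def)
    have r1: "Hs (x - 1) = Hs x - 1 / x" using Hs_rec'[OF x1(1)] by simp
    have r2: "Hsm 2 (x - 1) = Hsm 2 x - 1 / x ^ 2" using Hsm_rec'[OF x1(1), of 2] by simp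
    have f1: "F (real i) = Hs x ^ 3 + Hs x * Hsm 2 x + Hs x * zeta_nat 2" by (simp add: F_def x_def)
    have f2: "F (real i - 1) = (Hs x - 1 / x) ^ 3 + (Hs x - 1 / x) * (Hsm 2 x - 1 / x ^ 2) + (Hs x - 1 / x) * zeta_nat 2"
      unfolding F_def r0(1) r1 r2 ..
    have ri: "real i > 0" using i by auto
    show "F (real i) - F (real i - 1) + Hs (\<beta> + real i) / (\<beta> + real i) ^ 2
          + \<beta> * (Hs (\<beta> + real i) ^ 2 / (real i * (\<beta> + real i)))
        = (2 * ((Hs (\<beta> + real i) ^ 2 + Hsm 2 (\<beta> + real i)) / (\<beta> + real i)) - (Hs (\<beta> + real i) / (\<beta> + real i) ^ 2 - (zeta_nat 2 - Hsm 2 (\<beta> + real i)) / (\<beta> + real i))) + Hs (\<beta> + real i) ^ 2 / real i"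
      unfolding f1 f2 x_def[symmetric] unfolding r0(2) by (rule alg_HH[OF x1(2) ri])
  qed
  finally have val: "Hs \<alpha> ^ 3 + Hs \<alpha> * Hsm 2 \<alpha> + Hs \<alpha> * zeta_nat 2
         - Hs (\<alpha> - real j) ^ 3 - Hs (\<alpha> - real j) * Hsm 2 (\<alpha> - real j)
         - Hs (\<alpha> - real j) * zeta_nat 2
         + (\<Sum>i=1..j. Hs (\<alpha> + real i - real j) / (\<alpha> + real i - real j) ^ 2)
         - (real j - \<alpha>) * (\<Sum>i=1..j. Hs (\<alpha> + real i - real j) ^ 2 / (real i * (\<alpha> + real i - real j)))
      = (\<Sum>i=1..j. (2 * ((Hs (\<beta> + real i) ^ 2 + Hsm 2 (\<beta> + real i)) / (\<beta> + real i)) - (Hs (\<beta> + real i) / (\<beta> + real i) ^ 2 - (zeta_nat 2 - Hsm 2 (\<beta> + real i)) / (\<beta> + real i))) + Hs (\<beta> + real i) ^ 2 / real i)" .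
  show ?thesis unfolding val using S unfolding a\<beta>[symmetric] .
qed

lemma pf_step:
  fixes x :: real
  shows "(\<Sum>j\<le>Suc k. (-1)^j * real (Suc k choose j) / (x + real j))
       = (\<Sum>j\<le>k. (-1)^j * real (k choose j) / (x + real j)) - (\<Sum>j\<le>k. (-1)^j * real (k choose j) / (x + 1 + real j))"
proof -
  define b where "b j = (-1)^j * real (k choose j) / (x + real j)" for j
  have "(\<Sum>j\<le>Suc k. (-1)^j * real (Suc k choose j) / (x + real j))
      = 1 / x + (\<Sum>i\<le>k. (-1)^(Suc i) * real (Suc k choose Suc i) / (x + real (Suc i)))"
    by (subst sum.atMost_Suc_shift) simp
  also have "(\<Sum>i\<le>k. (-1)^(Suc i) * real (Suc k choose Suc i) / (x + real (Suc i)))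
      = - (\<Sum>i\<le>k. (-1)^i * real (k choose i) / (x + 1 + real i)) + (\<Sum>i\<le>k. b (Suc i))"
    by (simp add: b_def sum.distrib[symmetric] sum_negf[symmetric]) (rule sum.cong, simp_all add: add_divide_distrib add_ac ring_distribs)
  also have "(\<Sum>i\<le>k. b (Suc i)) = (\<Sum>i\<le>Suc k. b i) - b 0"
    using sum.atMost_Suc_shift[of b k] by simp
  also have "(\<Sum>i\<le>Suc k. b i) = (\<Sum>i\<le>k. b i)" by (simp add: b_def)
  finally show ?thesis by (simp add: b_def)
qed

lemma pf_poch:
  fixes x :: real
  assumes "x > 0"
  shows "(\<Sum>j\<le>k. (-1)^j * real (k choose j) / (x + real j)) = fact k / pochhammer x (Suc k)"
  using assms
proof (induction k arbitrary: x)
  case 0 thus ?case by simp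
next
  case (Suc k)
  have x1: "x + 1 > 0" using Suc by simp
  have "(\<Sum>j\<le>Suc k. (-1)^j * real (Suc k choose j) / (x + real j))
      = fact k / pochhammer x (Suc k) - fact k / pochhammer (x + 1) (Suc k)"
    unfolding pf_step Suc.IH[OF Suc.prems] Suc.IH[OF x1] ..
  also have "\<dots> = fact (Suc k) / pochhammer x (Suc (Suc k))"
  proof -
    define Q where "Q = pochhammer (x + 1) k"
    have Q: "Q > 0" unfolding Q_def using x1 by (rule pochhammer_pos)
    have p1: "pochhammer x (Suc k) = x * Q" by (simp add: Q_def pochhammer_rec)
    have p2: "pochhammer (x + 1) (Suc k) = Q * (x + 1 + real k)" by (simp add: Q_def pochhammer_Suc)
    have p3: "pochhammer x (Suc (Suc k)) = x * (Q * (x + 1 + real k))"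
      by (simp only: pochhammer_rec[of x "Suc k"] p2)
    have "x \<noteq> 0" "Q \<noteq> 0" "x + 1 + real k \<noteq> 0" using Suc.prems Q by auto
    thus ?thesis unfolding p1 p2 p3 by (simp add: divide_simps) (simp add: algebra_simps)
  qed
  finally show ?case .
qed

lemma pf:
  fixes n k :: nat
  assumes "k \<ge> 1"
  shows "1 / (real (Suc n) * real ((Suc n + k) choose k))
       = (\<Sum>j=1..k. (-1) ^ (j+1) * real (k choose j) * (1 / real (Suc n) - 1 / (real (Suc n) + real j)))"
proof -
  define N where "N = real (Suc n)"
  have N0: "N > 0" by (simp add: N_def)
  have alt: "(\<Sum>j\<le>k. (-1)^j * real (k choose j)) = (0::real)" using assms by (intro choose_alternating_sum) auto
  have at: "{..k} = insert 0 {1..k}" by auto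
  have alt1: "(\<Sum>j=1..k. (-1) ^ (j+1) * real (k choose j)) = (1::real)"
  proof -
    have "(\<Sum>j\<le>k. (-1)^j * real (k choose j)) = 1 + (\<Sum>j=1..k. (-1)^j * real (k choose j) :: real)"
      unfolding at by (subst sum.insert) auto
    hence "(\<Sum>j=1..k. (-1)^j * real (k choose j) :: real) = -1" using alt by simp
    hence "- (\<Sum>j=1..k. (-1)^j * real (k choose j) :: real) = 1" by simp
    have "(\<Sum>j=1..k. (-1) ^ (j+1) * real (k choose j)) = (\<Sum>j=1..k. - ((-1) ^ j * real (k choose j)) :: real)"
      by (rule sum.cong) auto
    also have "\<dots> = - (\<Sum>j=1..k. (-1)^j * real (k choose j) :: real)" by (rule sum_negf)
    finally show ?thesis using \<open>- (\<Sum>j=1..k. (-1)^j * real (k choose j) :: real) = 1\<close> by simp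
  qed
  have P: "(\<Sum>j\<le>k. (-1)^j * real (k choose j) / (N + real j)) = 1 / N + (\<Sum>j=1..k. (-1)^j * real (k choose j) / (N + real j))"
    unfolding at by (subst sum.insert) auto
  have "(\<Sum>j=1..k. (-1) ^ (j+1) * real (k choose j) * (1 / N - 1 / (N + real j)))
      = (\<Sum>j=1..k. (-1) ^ (j+1) * real (k choose j)) * (1 / N) + (\<Sum>j=1..k. (-1)^j * real (k choose j) / (N + real j))"
  proof -
    have "(\<Sum>j=1..k. (-1) ^ (j+1) * real (k choose j) * (1 / N - 1 / (N + real j)))
        = (\<Sum>j=1..k. (-1) ^ (j+1) * real (k choose j) * (1 / N) + (-1)^j * real (k choose j) / (N + real j))"
      by (rule sum.cong) (auto simp: algebra_simps)
    also have "\<dots> = (\<Sum>j=1..k. (-1) ^ (j+1) * real (k choose j) * (1 / N)) + (\<Sum>j=1..k. (-1)^j * real (k choose j) / (N + real j))"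
      by (rule sum.distrib)
    also have "(\<Sum>j=1..k. (-1) ^ (j+1) * real (k choose j) * (1 / N)) = (\<Sum>j=1..k. (-1) ^ (j+1) * real (k choose j)) * (1 / N)"
      by (rule sum_distrib_right[symmetric])
    finally show ?thesis .
  qed
  also have "\<dots> = (\<Sum>j\<le>k. (-1)^j * real (k choose j) / (N + real j))" unfolding alt1 P by simp
  also have "\<dots> = fact k / pochhammer N (Suc k)" by (rule pf_poch[OF N0])
  also have "pochhammer N (Suc k) = N * (real ((Suc n + k) choose k) * fact k)"
  proof -
    have "real ((Suc n + k) choose k) = pochhammer (real (Suc n + k) - real k + 1) k / fact k"
      by (simp add: binomial_gbinomial gbinomial_pochhammer')
    also have "real (Suc n + k) - real k + 1 = N + 1" by (simp add: N_def)
    finally have "real ((Suc n + k) choose k) * fact k = pochhammer (N + 1) k" by simp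
    thus ?thesis using pochhammer_rec[of N k] by simp
  qed
  also have "fact k / (N * (real ((Suc n + k) choose k) * fact k)) = 1 / (N * real ((Suc n + k) choose k))"
  proof -
    have "fact k \<noteq> (0::real)" by simp
    thus ?thesis by (metis divide_divide_eq_left mult.commute nonzero_divide_mult_cancel_left)
  qed
  finally show ?thesis by (simp add: N_def)
qed

lemma combine:
  fixes f :: "nat \<Rightarrow> real"
  assumes k: "k \<ge> 1" and V: "\<And>j. j \<in> {1..k} \<Longrightarrow> (\<lambda>n. f n * (1 / real (Suc n) - 1 / (real (Suc n) + real j))) sums V j"
  shows "(\<lambda>n. f n / (real (Suc n) * real ((Suc n + k) choose k))) sums (\<Sum>j=1..k. (-1) ^ (j+1) * real (k choose j) * V j)"
proof -
  have "(\<lambda>n. \<Sum>j=1..k. (-1) ^ (j+1) * real (k choose j) * (f n * (1 / real (Suc n) - 1 / (real (Suc n) + real j))))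
      sums (\<Sum>j=1..k. (-1) ^ (j+1) * real (k choose j) * V j)"
    by (intro sums_sum sums_mult V)
  moreover have "(\<Sum>j=1..k. (-1) ^ (j+1) * real (k choose j) * (f n * (1 / real (Suc n) - 1 / (real (Suc n) + real j))))
      = f n / (real (Suc n) * real ((Suc n + k) choose k))" for n
  proof -
    have "f n / (real (Suc n) * real ((Suc n + k) choose k)) = f n * (1 / (real (Suc n) * real ((Suc n + k) choose k)))" by simp
    also have "\<dots> = f n * (\<Sum>j=1..k. (-1) ^ (j+1) * real (k choose j) * (1 / real (Suc n) - 1 / (real (Suc n) + real j)))"
      by (simp only: pf[OF k])
    also have "\<dots> = (\<Sum>j=1..k. (-1) ^ (j+1) * real (k choose j) * (f n * (1 / real (Suc n) - 1 / (real (Suc n) + real j))))"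
      by (simp add: sum_distrib_left mult_ac)
    finally show ?thesis by simp
  qed
  ultimately show ?thesis by simp
qed

theorem mainTheorem18:
  fixes k :: nat and \<alpha> :: real
  assumes "k \<ge> 1" and "\<alpha> > real k"
  shows
   "((\<lambda>n. Hs (real (Suc n) + \<alpha>) / (real (Suc n) * real ((Suc n + k) choose k))) sums
      (\<Sum>j=1..k. (-1) ^ (j+1) * real (k choose j) *
        (Hs \<alpha> ^ 2 + Hsm 2 \<alpha> - Hs (\<alpha> - real j) ^ 2 - Hsm 2 (\<alpha> - real j)
         - (real j - \<alpha>) * (\<Sum>i=1..j. Hs (\<alpha> + real i - real j) / (real i * (\<alpha> + real i - real j))))))
    \<and>
    ((\<lambda>n. Hsm 2 (real (Suc n) + \<alpha>) / (real (Suc n) * real ((Suc n + k) choose k))) sums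
      (\<Sum>j=1..k. (-1) ^ (j+1) * real (k choose j) *
        (2 * Hsm 3 \<alpha> + Hs (\<alpha> - real j) * zeta_nat 2 + 2 * Hs \<alpha> * Hsm 2 \<alpha>
         - 2 * Hsm 3 (\<alpha> - real j) - Hs \<alpha> * zeta_nat 2
         - 2 * Hs (\<alpha> - real j) * Hsm 2 (\<alpha> - real j)
         - (real j - \<alpha>) * (\<Sum>i=1..j. Hsm 2 (\<alpha> + real i - real j) / (real i * (\<alpha> + real i - real j)))
         - (\<Sum>i=1..j. Hs (\<alpha> + real i - real j) / (\<alpha> + real i - real j) ^ 2))))
    \<and>
    ((\<lambda>n. Hs (real (Suc n) + \<alpha>) ^ 2 / (real (Suc n) * real ((Suc n + k) choose k))) sums
      (\<Sum>j=1..k. (-1) ^ (j+1) * real (k choose j) *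
        (Hs \<alpha> ^ 3 + Hs \<alpha> * Hsm 2 \<alpha> + Hs \<alpha> * zeta_nat 2
         - Hs (\<alpha> - real j) ^ 3 - Hs (\<alpha> - real j) * Hsm 2 (\<alpha> - real j)
         - Hs (\<alpha> - real j) * zeta_nat 2
         + (\<Sum>i=1..j. Hs (\<alpha> + real i - real j) / (\<alpha> + real i - real j) ^ 2)
         - (real j - \<alpha>) * (\<Sum>i=1..j. Hs (\<alpha> + real i - real j) ^ 2 / (real i * (\<alpha> + real i - real j))))))"
proof -
  have aj: "\<alpha> > real j" if "j \<in> {1..k}" for j using that assms by auto
  show ?thesis by (intro conjI combine[OF assms(1)] T_H T_H2 T_HH aj)
qed

end
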